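(* Let $H_t=\mathbb{E}(Y_tY_t')$ (expectation under the annealed law $\mathbb{P}$) and $H^\xi_t=\mathbb{E}_\xi(Y_tY_t')$ (expectation under the quenched law $\mathbb{P}_\xi$), where $Y_t'$ is the transpose. Then $$\frac1t H_t\to\eta^2,$$ and for $\Pi$-almost every $\xi$, $$\frac1t H^\xi_t\to\eta^2,$$ as $t\to\infty$, where $(\eta^2)_{ij}=\sum_{u\in\mathbb{Z}^n}(u_i-b_i)(u_j-b_j)\bar P(u)$.
   Context: Let $\mathbb{S}$ be a finite set and $\pi$ a probability measure on $\mathbb{S}$. The environment $\xi=\{\xi_t(x): x\in\mathbb{Z}^n, t\in\mathbb{Z}^+\}$ consists of i.i.d. $\mathbb{S}$-valued random variables with law $\pi$; $\Pi$ denotes its law. Let $P_0$ be a probability distribution on $\mathbb{Z}^n$ and $c:\mathbb{Z}^n\times\mathbb{S}\to\mathbb{R}$ such that: $0\le P_0(u)+c(u,s)\le 1$ for all $u,s$; $\sum_{u}c(u,s)=0$ for all $s$; $\sum_{s}c(u,s)\pi(s)=0$ for all $u$; $P_0$ and $c$ have bounded range; and there is $b^c\in\mathbb{R}^n$ with $\sum_u u\,c(u,s)=b^c$ for all $s$. Given $\xi$, $(X_t)$ is the Markov chain on $\mathbb{Z}^n$ (from a fixed starting point) with $\mathbb{P}(X_{t+1}=y\mid X_t=x,\xi)=P_0(y-x)+c(y-x,\xi_t(x))$; $\mathbb{P}_\xi$ denotes this quenched law and $\mathbb{P}=\int\mathbb{P}_\xi\,\Pi(d\xi)$ the annealed law.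 Let $\bar P(u)=P_0(u)+\sum_s\pi(s)c(u,s)$, $b^0=\sum_u uP_0(u)$, $b=b^0+b^c$, $Y_t=X_t-tb$ (a column vector). *)

theory Defs
  imports "HOL-Probability.Probability"
begin

definition rvec :: "int ^ 'n \<Rightarrow> real ^ 'n" where
  "rvec u = (\<chi> i. real_of_int (u $ i))"

definition jump_pmf :: "(int ^ 'n \<Rightarrow> real) \<Rightarrow> (int ^ 'n \<Rightarrow> 's \<Rightarrow> real) \<Rightarrow> 's \<Rightarrow> (int ^ 'n) pmf" where
  "jump_pmf P0 c s = embed_pmf (\<lambda>u. P0 u + c u s)"

(* quenched law of X_t: transition x \<rightarrow> y with probability P0(y-x)+c(y-x, xi_t(x)) *)
fun quenched_dist :: "(int ^ 'n \<Rightarrow> real) \<Rightarrow> (int ^ 'n \<Rightarrow> 's \<Rightarrow> real) \<Rightarrow> int ^ 'n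
    \<Rightarrow> (nat \<times> (int ^ 'n) \<Rightarrow> 's) \<Rightarrow> nat \<Rightarrow> (int ^ 'n) pmf" where
  "quenched_dist P0 c x0 \<xi> 0 = return_pmf x0"
| "quenched_dist P0 c x0 \<xi> (Suc t) =
     bind_pmf (quenched_dist P0 c x0 \<xi> t)
       (\<lambda>x. map_pmf (\<lambda>u. x + u) (jump_pmf P0 c (\<xi> (t, x))))"

definition env_law :: "'s pmf \<Rightarrow> (nat \<times> (int ^ 'n) \<Rightarrow> 's) measure" where
  "env_law \<pi> = PiM UNIV (\<lambda>_. measure_pmf \<pi>)"

definition annealed_dist :: "(int ^ 'n \<Rightarrow> real) \<Rightarrow> (int ^ 'n \<Rightarrow> 's \<Rightarrow> real) \<Rightarrow> int ^ 'n
    \<Rightarrow> 's pmf \<Rightarrow> nat \<Rightarrow> (int ^ 'n) measure" where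
  "annealed_dist P0 c x0 \<pi> t = env_law \<pi> \<bind> (\<lambda>\<xi>. measure_pmf (quenched_dist P0 c x0 \<xi> t))"

definition Yvec :: "real ^ 'n \<Rightarrow> nat \<Rightarrow> int ^ 'n \<Rightarrow> real ^ 'n" where
  "Yvec b t x = rvec x - real t *\<^sub>R b"

definition second_moment :: "real ^ 'n \<Rightarrow> nat \<Rightarrow> (int ^ 'n) measure \<Rightarrow> real ^ 'n ^ 'n" where
  "second_moment b t M = (\<chi> i j. \<integral>x. (Yvec b t x $ i) * (Yvec b t x $ j) \<partial>M)"

end

theory Submission
  imports Defs
begin

lemma finite_rvec_ball: "finite {u::int^'n. norm (rvec u) \<le> R}"
proof -
  define N where "N = \<lceil>R\<rceil>"
  have "{u::int^'n. norm (rvec u) \<le> R} \<subseteq> vec_lambda ` (PiE UNIV (\<lambda>_. {-N..N}))"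
  proof
    fix u :: "int^'n" assume "u \<in> {u. norm (rvec u) \<le> R}"
    hence h: "norm (rvec u) \<le> R" by simp
    have "\<forall>i. u $ i \<in> {-N..N}"
    proof
      fix i
      have "\<bar>rvec u $ i\<bar> \<le> norm (rvec u)" by (rule component_le_norm_cart)
      hence "\<bar>real_of_int (u $ i)\<bar> \<le> R" using h by (simp add: rvec_def)
      thus "u $ i \<in> {-N..N}" unfolding N_def by (simp add: abs_le_iff) linarith
    qed
    hence "vec_nth u \<in> PiE UNIV (\<lambda>_. {-N..N})" by auto
    thus "u \<in> vec_lambda ` (PiE UNIV (\<lambda>_. {-N..N}))"
      by (metis image_eqI vec_nth_inverse)
  qed
  moreover have "finite (vec_lambda ` (PiE UNIV (\<lambda>_. {-N..N})) :: (int^'n) set)"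
    by (intro finite_imageI finite_PiE) auto
  ultimately show ?thesis by (rule finite_subset)
qed

lemma rvec_add: "rvec (x + y) = rvec x + rvec y"
  by (simp add: rvec_def vec_eq_iff)

lemma infsum_fin: "finite A \<Longrightarrow> (\<And>x. x \<notin> A \<Longrightarrow> f x = 0) \<Longrightarrow> infsum f UNIV = sum f A"
proof -
  assume A: "finite A" and z: "\<And>x. x \<notin> A \<Longrightarrow> f x = 0"
  have "infsum f UNIV = infsum f A"
    by (rule infsum_cong_neutral) (auto simp: z)
  also have "\<dots> = sum f A" using A by (rule infsum_finite)
  finally show ?thesis .
qed


locale rwalk =
  fixes \<pi> :: "'s::finite pmf"
    and P0 :: "int ^ 'n \<Rightarrow> real"
    and c :: "int ^ 'n \<Rightarrow> 's \<Rightarrow> real"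
    and x0 :: "int ^ 'n"
    and bc :: "real ^ 'n"
  assumes P0_nonneg: "\<And>u. P0 u \<ge> 0"
    and P0_sum: "(\<Sum>\<^sub>\<infinity>u. P0 u) = 1"
    and Pc_bounds: "\<And>u s. 0 \<le> P0 u + c u s \<and> P0 u + c u s \<le> 1"
    and c_sum: "\<And>s. (\<Sum>\<^sub>\<infinity>u. c u s) = 0"
    and c_mean: "\<And>u. (\<Sum>s\<in>UNIV. c u s * pmf \<pi> s) = 0"
    and P0_range: "\<exists>R. \<forall>u. P0 u \<noteq> 0 \<longrightarrow> norm (rvec u) \<le> R"
    and c_range: "\<exists>R. \<forall>u s. c u s \<noteq> 0 \<longrightarrow> norm (rvec u) \<le> R"
    and c_drift: "\<And>s. (\<Sum>\<^sub>\<infinity>u. c u s *\<^sub>R rvec u) = bc"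
begin

definition F :: "(int^'n) set" where "F = {u. P0 u \<noteq> 0 \<or> (\<exists>s. c u s \<noteq> 0)}"

lemma finite_F: "finite F"
proof -
  obtain R1 where R1: "\<forall>u. P0 u \<noteq> 0 \<longrightarrow> norm (rvec u) \<le> R1" using P0_range by blast
  obtain R2 where R2: "\<forall>u s. c u s \<noteq> 0 \<longrightarrow> norm (rvec u) \<le> R2" using c_range by blast
  have "F \<subseteq> {u. norm (rvec u) \<le> max R1 R2}" using R1 R2 unfolding F_def by force
  thus ?thesis by (rule finite_subset[OF _ finite_rvec_ball])
qed

lemma P0_out: "u \<notin> F \<Longrightarrow> P0 u = 0" and c_out: "u \<notin> F \<Longrightarrow> c u s = 0"
  by (auto simp: F_def)

lemma sum_P0: "(\<Sum>u\<in>F. P0 u) = 1"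
  using P0_sum infsum_fin[OF finite_F, of P0] P0_out by simp

lemma sum_c: "(\<Sum>u\<in>F. c u s) = 0"
  using c_sum[of s] infsum_fin[OF finite_F, of "\<lambda>u. c u s"] c_out by simp

definition b :: "real^'n" where "b = (\<Sum>\<^sub>\<infinity>u. P0 u *\<^sub>R rvec u) + bc"

lemma b_eq: "(\<Sum>u\<in>F. (P0 u + c u s) *\<^sub>R rvec u) = b"
proof -
  have 1: "(\<Sum>\<^sub>\<infinity>u. P0 u *\<^sub>R rvec u) = (\<Sum>u\<in>F. P0 u *\<^sub>R rvec u)"
    by (rule infsum_fin[OF finite_F]) (simp add: P0_out)
  have 2: "(\<Sum>\<^sub>\<infinity>u. c u s *\<^sub>R rvec u) = (\<Sum>u\<in>F. c u s *\<^sub>R rvec u)"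
    by (rule infsum_fin[OF finite_F]) (simp add: c_out)
  show ?thesis using 1 2 c_drift[of s] unfolding b_def
    by (simp add: scaleR_add_left sum.distrib)
qed

abbreviation J where "J s \<equiv> jump_pmf P0 c s"

lemma pmf_J: "pmf (J s) u = P0 u + c u s"
proof -
  have "(\<integral>\<^sup>+x. ennreal (P0 x + c x s) \<partial>count_space UNIV) = (\<Sum>x\<in>F. ennreal (P0 x + c x s))"
    by (rule nn_integral_count_space') (auto simp: finite_F P0_out c_out)
  also have "\<dots> = ennreal (\<Sum>x\<in>F. (P0 x + c x s))"
    by (rule sum_ennreal) (use Pc_bounds in auto)
  also have "\<dots> = 1" by (simp add: sum.distrib sum_P0 sum_c)
  finally show ?thesis unfolding jump_pmf_def
    by (subst pmf_embed_pmf) (use Pc_bounds in auto)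
qed

lemma set_J: "set_pmf (J s) \<subseteq> F"
proof
  fix x assume "x \<in> set_pmf (J s)"
  then have "P0 x + c x s \<noteq> 0" by (simp add: set_pmf_eq pmf_J)
  then show "x \<in> F" unfolding F_def by (cases "P0 x = 0") auto
qed

fun Bs :: "nat \<Rightarrow> (int^'n) set" where
  "Bs 0 = {x0}"
| "Bs (Suc t) = (\<lambda>(x,u). x + u) ` (Bs t \<times> F)"

lemma finite_Bs: "finite (Bs t)"
  by (induction t) (auto simp: finite_F)

abbreviation q where "q \<xi> t \<equiv> quenched_dist P0 c x0 \<xi> t"

lemma set_q: "set_pmf (q \<xi> t) \<subseteq> Bs t"
proof (induction t)
  case 0 then show ?case by simp
next
  case (Suc t)
  show ?case
  proof
    fix y assume "y \<in> set_pmf (q \<xi> (Suc t))"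
    then obtain x u where x: "x \<in> set_pmf (q \<xi> t)" and u: "u \<in> set_pmf (J (\<xi> (t, x)))"
      and y: "y = x + u"
      by (auto simp: set_bind_pmf)
    have "(x, u) \<in> Bs t \<times> F" using x u Suc.IH set_J by blast
    then have "(\<lambda>(x,u). x + u) (x, u) \<in> (\<lambda>(x,u). x + u) ` (Bs t \<times> F)" by (rule imageI)
    then show "y \<in> Bs (Suc t)" using y by simp
  qed
qed

lemma q_dep: "(\<And>m y. m < t \<Longrightarrow> y \<in> Bs m \<Longrightarrow> \<xi> (m,y) = \<xi>' (m,y)) \<Longrightarrow> q \<xi> t = q \<xi>' t"
proof (induction t)
  case 0 then show ?case by simp
next
  case (Suc t)
  have e: "q \<xi> t = q \<xi>' t" using Suc by simp
  show ?case
    unfolding quenched_dist.simps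
  proof (rule bind_pmf_cong[OF e])
    fix x assume "x \<in> set_pmf (q \<xi>' t)"
    then have "x \<in> Bs t" using set_q by blast
    then have "\<xi> (t, x) = \<xi>' (t, x)" using Suc.prems by simp
    then show "map_pmf (\<lambda>u. x + u) (J (\<xi> (t, x))) = map_pmf (\<lambda>u. x + u) (J (\<xi>' (t, x)))" by simp
  qed
qed

end

lemma int_bind_pmf:
  fixes f :: "'a \<Rightarrow> real"
  assumes C: "finite C" and k: "\<And>x. x \<in> set_pmf p \<Longrightarrow> set_pmf (k x) \<subseteq> C"
  shows "measure_pmf.expectation (bind_pmf p k) f =
         measure_pmf.expectation p (\<lambda>x. measure_pmf.expectation (k x) f)"
proof -
  define f' where "f' = (\<lambda>y. if y \<in> C then f y else 0)"
  have sb: "set_pmf (bind_pmf p k) \<subseteq> C" using k by (auto simp: set_bind_pmf)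
  have 1: "measure_pmf.expectation (bind_pmf p k) f = measure_pmf.expectation (bind_pmf p k) f'"
    by (rule integral_cong_AE) (use sb in \<open>auto simp: f'_def AE_measure_pmf_iff\<close>)
  have bnd: "\<bar>f' y\<bar> \<le> (\<Sum>a\<in>C. \<bar>f a\<bar>)" for y
    using C by (auto simp: f'_def intro: member_le_sum)
  have 2: "measure_pmf.expectation (bind_pmf p k) f' =
      measure_pmf.expectation p (\<lambda>x. measure_pmf.expectation (k x) f')"
    unfolding measure_pmf_bind
    by (rule integral_bind[where K="count_space UNIV" and B="\<Sum>a\<in>C. \<bar>f a\<bar>" and B'=1])
       (auto simp: bnd measure_pmf_in_subprob_algebra measure_pmf.emeasure_space_1 prob_space_measure_pmf[THEN prob_space.axioms(1)])
  have 3: "measure_pmf.expectation (k x) f' = measure_pmf.expectation (k x) f" if "x \<in> set_pmf p" for x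
    by (rule integral_cong_AE) (use k[OF that] in \<open>auto simp: f'_def AE_measure_pmf_iff\<close>)
  show ?thesis unfolding 1 2
    by (rule integral_cong_AE) (auto simp: AE_measure_pmf_iff 3)
qed

context rwalk begin

abbreviation \<Omega> :: "(nat \<times> (int^'n) \<Rightarrow> 's) measure" where "\<Omega> \<equiv> env_law \<pi>"

lemma space_\<Omega>: "space \<Omega> = UNIV"
  by (simp add: env_law_def space_PiM)

lemma prob_\<Omega>: "prob_space \<Omega>"
  unfolding env_law_def by (rule prob_space_PiM) (rule prob_space_measure_pmf)

lemma meas_coord: "(\<lambda>\<xi>. h (\<xi> z) :: real) \<in> borel_measurable \<Omega>"
proof -
  have "(\<lambda>\<xi>. \<xi> z) \<in> measurable \<Omega> (measure_pmf \<pi>)"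
    unfolding env_law_def by (rule measurable_component_singleton) simp
  moreover have "h \<in> measurable (measure_pmf \<pi>) borel" by simp
  ultimately show ?thesis using measurable_compose by blast
qed

lemma pmf_q_Suc: "pmf (q \<xi> (Suc t)) y = (\<Sum>x\<in>Bs t. pmf (q \<xi> t) x * pmf (J (\<xi> (t,x))) (y - x))"
proof -
  have m: "pmf (map_pmf (\<lambda>u. x + u) (J s)) y = pmf (J s) (y - x)" for x s
  proof -
    have "pmf (map_pmf (\<lambda>u. x + u) (J s)) (x + (y - x)) = pmf (J s) (y - x)"
      by (rule pmf_map_inj') (simp add: inj_def)
    thus ?thesis by simp
  qed
  show ?thesis
    apply (simp add: pmf_bind m)
    apply (subst integral_measure_pmf[OF finite_Bs[of t]])
    using set_q[of \<xi> t] by auto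
qed

lemma meas_pmf_q: "(\<lambda>\<xi>. pmf (q \<xi> t) y) \<in> borel_measurable \<Omega>"
proof (induction t arbitrary: y)
  case 0 then show ?case by simp
next
  case (Suc t)
  show ?case unfolding pmf_q_Suc
    by (intro borel_measurable_sum borel_measurable_times Suc meas_coord)
qed

lemma int_q: "measure_pmf.expectation (q \<xi> t) f = (\<Sum>x\<in>Bs t. pmf (q \<xi> t) x * f x)"
  by (subst integral_measure_pmf[OF finite_Bs[of t]]) (use set_q[of \<xi> t] in auto)

lemma meas_int_q: "(\<lambda>\<xi>. measure_pmf.expectation (q \<xi> t) (f \<xi> :: _ \<Rightarrow> real)) \<in> borel_measurable \<Omega>"
  if "\<And>x. (\<lambda>\<xi>. f \<xi> x) \<in> borel_measurable \<Omega>"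
  by (simp only: int_q) (intro borel_measurable_sum borel_measurable_times meas_pmf_q that)

lemma sum_pmf_q: "(\<Sum>x\<in>Bs t. pmf (q \<xi> t) x) = 1"
  using int_q[of \<xi> t "\<lambda>_. 1"] by simp

lemma sum_J: "(\<Sum>u\<in>F. pmf (J s) u) = 1"
  by (simp add: pmf_J sum.distrib sum_P0 sum_c)

lemma mean_J: "(\<Sum>u\<in>F. pmf (J s) u * rvec u $ k) = b $ k"
proof -
  have "(\<Sum>u\<in>F. (P0 u + c u s) *\<^sub>R rvec u) $ k = b $ k" by (simp add: b_eq)
  thus ?thesis by (simp add: pmf_J)
qed

lemma centered_J: "(\<Sum>u\<in>F. pmf (J s) u * (rvec u $ k - b $ k)) = 0"
  by (simp add: right_diff_distrib sum_subtractf mean_J flip: sum_distrib_right) (simp add: sum_J)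

end


context rwalk begin

definition Yf :: "'n \<Rightarrow> 'n \<Rightarrow> nat \<Rightarrow> int^'n \<Rightarrow> real" where
  "Yf i j t x = Yvec b t x $ i * Yvec b t x $ j"

definition G :: "'n \<Rightarrow> 'n \<Rightarrow> 's \<Rightarrow> real" where
  "G i j s = (\<Sum>u\<in>F. pmf (J s) u * ((rvec u $ i - b $ i) * (rvec u $ j - b $ j)))"

definition mom :: "'n \<Rightarrow> 'n \<Rightarrow> (nat \<times> (int^'n) \<Rightarrow> 's) \<Rightarrow> nat \<Rightarrow> real" where
  "mom i j \<xi> t = measure_pmf.expectation (q \<xi> t) (Yf i j t)"

lemma Yvec_Suc: "Yvec b (Suc t) (x + u) $ k = Yvec b t x $ k + (rvec u $ k - b $ k)"
  by (simp add: Yvec_def rvec_add algebra_simps)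

lemma inner: "(\<Sum>u\<in>F. pmf (J s) u * Yf i j (Suc t) (x + u)) = Yf i j t x + G i j s"
proof -
  define A where "A k = Yvec b t x $ k" for k
  define d where "d u k = rvec u $ k - b $ k" for u k
  define p where "p u = pmf (J s) u" for u
  have "(\<Sum>u\<in>F. pmf (J s) u * Yf i j (Suc t) (x + u)) =
     (\<Sum>u\<in>F. A i * A j * p u + A i * (p u * d u j) + A j * (p u * d u i) + p u * (d u i * d u j))"
    by (intro sum.cong refl) (simp only: Yf_def Yvec_Suc A_def d_def p_def, simp add: algebra_simps)
  also have "\<dots> = A i * A j * (\<Sum>u\<in>F. p u) + A i * (\<Sum>u\<in>F. p u * d u j) + A j * (\<Sum>u\<in>F. p u * d u i)
      + (\<Sum>u\<in>F. p u * (d u i * d u j))"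
    by (simp add: sum.distrib sum_distrib_left)
  also have "\<dots> = Yf i j t x + G i j s"
    using sum_J[of s] centered_J[of s i] centered_J[of s j]
    by (simp add: p_def d_def A_def Yf_def G_def)
  finally show ?thesis .
qed

lemma fin_q: "finite (set_pmf (q \<xi> t))"
  by (rule finite_subset[OF set_q finite_Bs])

lemma mom_Suc: "mom i j \<xi> (Suc t) = mom i j \<xi> t + measure_pmf.expectation (q \<xi> t) (\<lambda>x. G i j (\<xi> (t,x)))"
proof -
  have "mom i j \<xi> (Suc t) = measure_pmf.expectation (q \<xi> t)
      (\<lambda>x. measure_pmf.expectation (map_pmf (\<lambda>u. x + u) (J (\<xi> (t, x)))) (Yf i j (Suc t)))"
    unfolding mom_def quenched_dist.simps
  proof (rule int_bind_pmf[OF finite_Bs[of "Suc t"]])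
    fix x assume "x \<in> set_pmf (q \<xi> t)"
    then have "x \<in> Bs t" using set_q by blast
    then show "set_pmf (map_pmf (\<lambda>u. x + u) (J (\<xi> (t, x)))) \<subseteq> Bs (Suc t)"
      using set_J \<open>x \<in> Bs t\<close> by (auto simp: image_iff)
  qed
  also have "\<dots> = measure_pmf.expectation (q \<xi> t) (\<lambda>x. Yf i j t x + G i j (\<xi> (t,x)))"
  proof (rule Bochner_Integration.integral_cong[OF refl])
    fix x
    have "measure_pmf.expectation (map_pmf (\<lambda>u. x + u) (J (\<xi> (t, x)))) (Yf i j (Suc t)) =
          (\<Sum>u\<in>F. pmf (J (\<xi> (t, x))) u * Yf i j (Suc t) (x + u))"
      by (simp, subst integral_measure_pmf[OF finite_F]) (use set_J in auto)
    then show "measure_pmf.expectation (map_pmf (\<lambda>u. x + u) (J (\<xi> (t, x)))) (Yf i j (Suc t)) =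
          Yf i j t x + G i j (\<xi> (t,x))" by (simp add: inner)
  qed
  also have "\<dots> = mom i j \<xi> t + measure_pmf.expectation (q \<xi> t) (\<lambda>x. G i j (\<xi> (t,x)))"
    unfolding mom_def
    by (rule Bochner_Integration.integral_add) (auto intro: integrable_measure_pmf_finite fin_q)
  finally show ?thesis .
qed

lemma mom_formula: "mom i j \<xi> t = Yf i j 0 x0 + (\<Sum>k<t. measure_pmf.expectation (q \<xi> k) (\<lambda>x. G i j (\<xi> (k,x))))"
proof (induction t)
  case 0 then show ?case by (simp add: mom_def)
next
  case (Suc t) then show ?case by (simp add: mom_Suc)
qed

definition eta :: "'n \<Rightarrow> 'n \<Rightarrow> real" where "eta i j = (\<Sum>s\<in>UNIV. pmf \<pi> s * G i j s)"

definition gg :: "'n \<Rightarrow> 'n \<Rightarrow> 's \<Rightarrow> real" where "gg i j s = G i j s - eta i j"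

lemma sum_pi: "(\<Sum>s\<in>UNIV. pmf \<pi> s) = 1"
  by (rule sum_pmf_eq_1) auto

lemma gg_mean: "(\<Sum>s\<in>UNIV. pmf \<pi> s * gg i j s) = 0"
  by (simp add: gg_def right_diff_distrib sum_subtractf eta_def flip: sum_distrib_right) (simp add: sum_pi)

definition AA :: "'n \<Rightarrow> 'n \<Rightarrow> nat \<Rightarrow> (nat \<times> (int^'n) \<Rightarrow> 's) \<Rightarrow> real" where
  "AA i j k \<xi> = measure_pmf.expectation (q \<xi> k) (\<lambda>x. gg i j (\<xi> (k,x)))"

lemma mom_AA: "mom i j \<xi> t = Yf i j 0 x0 + real t * eta i j + (\<Sum>k<t. AA i j k \<xi>)"
proof -
  have "measure_pmf.expectation (q \<xi> k) (\<lambda>x. G i j (\<xi> (k,x))) = eta i j + AA i j k \<xi>" for k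
  proof -
    have "measure_pmf.expectation (q \<xi> k) (\<lambda>x. G i j (\<xi> (k,x))) =
          measure_pmf.expectation (q \<xi> k) (\<lambda>x. eta i j + gg i j (\<xi> (k,x)))"
      by (simp add: gg_def)
    also have "\<dots> = eta i j + AA i j k \<xi>"
      unfolding AA_def
      by (subst Bochner_Integration.integral_add) (auto intro: integrable_measure_pmf_finite fin_q)
    finally show ?thesis .
  qed
  then show ?thesis by (simp add: mom_formula sum.distrib)
qed

end


context rwalk begin

lemma bounded_integrable_\<Omega>:
  fixes f :: "_ \<Rightarrow> real"
  assumes "f \<in> borel_measurable \<Omega>" "\<And>\<xi>. \<bar>f \<xi>\<bar> \<le> B"
  shows "integrable \<Omega> f"
proof -
  interpret prob_space \<Omega> by (rule prob_\<Omega>)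
  show ?thesis by (rule integrable_const_bound[where B=B]) (use assms in auto)
qed

lemma indep0:
  fixes \<phi> :: "(nat \<times> (int^'n) \<Rightarrow> 's) \<Rightarrow> real" and g :: "'s \<Rightarrow> real"
  assumes K: "finite K" "z \<notin> K"
    and \<phi>m: "\<phi> \<in> borel_measurable \<Omega>"
    and \<phi>b: "\<And>\<xi>. \<bar>\<phi> \<xi>\<bar> \<le> C"
    and dep: "\<And>\<xi> \<xi>'. (\<And>w. w \<in> K \<Longrightarrow> \<xi> w = \<xi>' w) \<Longrightarrow> \<phi> \<xi> = \<phi> \<xi>'"
    and g0: "(\<Sum>s\<in>UNIV. pmf \<pi> s * g s) = 0"
  shows "(\<integral>\<xi>. \<phi> \<xi> * g (\<xi> z) \<partial>\<Omega>) = 0"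
proof -
  interpret PP: product_prob_space "\<lambda>_::(nat \<times> (int^'n)). measure_pmf \<pi>" "UNIV"
    by unfold_locales
  define L where "L = insert z K"
  define MK where "MK = PiM L (\<lambda>_::(nat \<times> (int^'n)). measure_pmf \<pi>)"
  define ext :: "(nat \<times> (int^'n) \<Rightarrow> 's) \<Rightarrow> (nat \<times> (int^'n) \<Rightarrow> 's)"
    where "ext \<eta> = (\<lambda>w. if w \<in> L then \<eta> w else undefined)" for \<eta>
  define \<Psi> where "\<Psi> \<eta> = \<phi> (ext \<eta>) * g (\<eta> z)" for \<eta>
  have extm: "ext \<in> measurable MK \<Omega>"
    unfolding env_law_def ext_def MK_def
  proof (rule measurable_PiM_single')
    fix i :: "nat \<times> (int^'n)"
    show "(\<lambda>\<eta>. if i \<in> L then \<eta> i else undefined) \<in> measurable (PiM L (\<lambda>_. measure_pmf \<pi>)) (measure_pmf \<pi>)"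
      by (cases "i \<in> L") (auto intro: measurable_component_singleton)
  qed (auto simp: space_PiM)
  have gm: "(\<lambda>\<eta>. g (\<eta> z)) \<in> borel_measurable MK"
  proof -
    have "(\<lambda>\<eta>. \<eta> z) \<in> measurable MK (measure_pmf \<pi>)"
      unfolding MK_def L_def by (rule measurable_component_singleton) simp
    moreover have "g \<in> measurable (measure_pmf \<pi>) borel" by simp
    ultimately show ?thesis using measurable_compose by blast
  qed
  have \<Psi>m: "\<Psi> \<in> borel_measurable MK"
    unfolding \<Psi>_def
    by (intro borel_measurable_times gm measurable_compose[OF extm \<phi>m])
  define Cg where "Cg = (\<Sum>s\<in>UNIV. \<bar>g s\<bar>)"
  have gb: "\<bar>g s\<bar> \<le> Cg" for s unfolding Cg_def by (rule member_le_sum) auto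
  have \<Psi>b: "\<bar>\<Psi> \<eta>\<bar> \<le> C * Cg" for \<eta>
    unfolding \<Psi>_def abs_mult by (intro mult_mono \<phi>b gb) (use \<phi>b[of \<xi>] in auto)
  have eq1: "\<phi> \<xi> * g (\<xi> z) = \<Psi> (restrict \<xi> L)" for \<xi>
  proof -
    have "\<phi> \<xi> = \<phi> (ext (restrict \<xi> L))"
      by (rule dep) (auto simp: ext_def L_def)
    thus ?thesis by (simp add: \<Psi>_def L_def)
  qed
  have "(\<integral>\<xi>. \<phi> \<xi> * g (\<xi> z) \<partial>\<Omega>) = (\<integral>\<xi>. \<Psi> (restrict \<xi> L) \<partial>\<Omega>)"
    by (simp add: eq1)
  also have "\<dots> = (\<integral>\<eta>. \<Psi> \<eta> \<partial>distr \<Omega> MK (\<lambda>\<xi>. restrict \<xi> L))"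
  proof -
    have rm: "(\<lambda>\<xi>. restrict \<xi> L) \<in> measurable \<Omega> MK"
      unfolding env_law_def MK_def by (rule measurable_restrict_subset) simp
    show ?thesis by (rule integral_distr[symmetric, OF rm \<Psi>m])
  qed
  also have "distr \<Omega> MK (\<lambda>\<xi>. restrict \<xi> L) = MK"
    unfolding env_law_def MK_def by (rule PP.distr_PiM_restrict_finite) (auto simp: L_def K)
  also have "(\<integral>\<eta>. \<Psi> \<eta> \<partial>MK) = (\<integral>\<eta>. (\<integral>y. \<Psi> (\<eta>(z := y)) \<partial>measure_pmf \<pi>) \<partial>PiM K (\<lambda>_. measure_pmf \<pi>))"
    unfolding MK_def L_def
  proof (rule PP.product_integral_insert[OF K])
    interpret PL: prob_space "PiM (insert z K) (\<lambda>_::(nat \<times> (int^'n)). measure_pmf \<pi>)"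
      by (rule prob_space_PiM) (rule prob_space_measure_pmf)
    show "integrable (PiM (insert z K) (\<lambda>_. measure_pmf \<pi>)) \<Psi>"
      by (rule PL.integrable_const_bound[where B="C * Cg"]) (use \<Psi>m \<Psi>b in \<open>auto simp: MK_def L_def\<close>)
  qed
  also have "\<dots> = (\<integral>\<eta>. 0 \<partial>PiM K (\<lambda>_. measure_pmf \<pi>))"
  proof (rule Bochner_Integration.integral_cong[OF refl])
    fix \<eta> :: "nat \<times> (int^'n) \<Rightarrow> 's"
    have "\<Psi> (\<eta>(z := y)) = \<phi> (ext \<eta>) * g y" for y
    proof -
      have "\<phi> (ext (\<eta>(z := y))) = \<phi> (ext \<eta>)"
        by (rule dep) (use K in \<open>auto simp: ext_def L_def\<close>)
      thus ?thesis by (simp add: \<Psi>_def)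
    qed
    hence "(\<integral>y. \<Psi> (\<eta>(z := y)) \<partial>measure_pmf \<pi>) = (\<integral>y. \<phi> (ext \<eta>) * g y \<partial>measure_pmf \<pi>)"
      by simp
    also have "\<dots> = \<phi> (ext \<eta>) * (\<integral>y. g y \<partial>measure_pmf \<pi>)" by simp
    also have "(\<integral>y. g y \<partial>measure_pmf \<pi>) = (\<Sum>s\<in>UNIV. pmf \<pi> s * g s)"
      by (subst integral_measure_pmf[of UNIV]) auto
    finally show "(\<integral>y. \<Psi> (\<eta>(z := y)) \<partial>measure_pmf \<pi>) = 0" by (simp only: g0 mult_zero_right)
  qed
  finally show ?thesis by simp
qed

end


context rwalk begin

definition Jset :: "nat \<Rightarrow> (nat \<times> (int^'n)) set" where "Jset k = (SIGMA m:{..<k}. Bs m)"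

lemma finite_Jset: "finite (Jset k)"
  unfolding Jset_def by (intro finite_SigmaI finite_lessThan finite_Bs)

lemma Jset_mono: "m \<le> k \<Longrightarrow> Jset m \<subseteq> Jset k"
  unfolding Jset_def by auto

lemma notin_Jset: "(k, x) \<notin> Jset k"
  unfolding Jset_def by auto

lemma q_dep': "(\<And>w. w \<in> Jset k \<Longrightarrow> \<xi> w = \<xi>' w) \<Longrightarrow> q \<xi> k = q \<xi>' k"
  by (rule q_dep) (auto simp: Jset_def)

definition Cg :: "'n \<Rightarrow> 'n \<Rightarrow> real" where "Cg i j = (\<Sum>s\<in>UNIV. \<bar>gg i j s\<bar>)"

lemma gg_bound: "\<bar>gg i j s\<bar> \<le> Cg i j"
  unfolding Cg_def by (rule member_le_sum) auto

lemma Cg_nonneg: "0 \<le> Cg i j"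
  unfolding Cg_def by (rule sum_nonneg) auto

lemma AA_sum: "AA i j k \<xi> = (\<Sum>x\<in>Bs k. pmf (q \<xi> k) x * gg i j (\<xi> (k,x)))"
  unfolding AA_def by (rule int_q)

lemma AA_bound: "\<bar>AA i j k \<xi>\<bar> \<le> Cg i j"
proof -
  have "\<bar>AA i j k \<xi>\<bar> \<le> (\<Sum>x\<in>Bs k. \<bar>pmf (q \<xi> k) x * gg i j (\<xi> (k,x))\<bar>)"
    unfolding AA_sum by (rule sum_abs)
  also have "\<dots> \<le> (\<Sum>x\<in>Bs k. pmf (q \<xi> k) x * Cg i j)"
    by (intro sum_mono) (simp add: abs_mult gg_bound mult_left_mono)
  also have "\<dots> = Cg i j" by (simp add: sum_distrib_right[symmetric] sum_pmf_q)
  finally show ?thesis .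
qed

lemma AA_meas: "AA i j k \<in> borel_measurable \<Omega>"
proof -
  have "(\<lambda>\<xi>. AA i j k \<xi>) \<in> borel_measurable \<Omega>"
    unfolding AA_def by (rule meas_int_q) (rule meas_coord)
  thus ?thesis by simp
qed

lemma AA_dep: "(\<And>w. w \<in> Jset (Suc k) \<Longrightarrow> \<xi> w = \<xi>' w) \<Longrightarrow> AA i j k \<xi> = AA i j k \<xi>'"
proof -
  assume h: "\<And>w. w \<in> Jset (Suc k) \<Longrightarrow> \<xi> w = \<xi>' w"
  have "q \<xi> k = q \<xi>' k" by (rule q_dep') (use h Jset_mono[of k "Suc k"] in auto)
  moreover have "\<xi> (k,x) = \<xi>' (k,x)" if "x \<in> Bs k" for x
    by (rule h) (use that in \<open>auto simp: Jset_def\<close>)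
  ultimately show ?thesis unfolding AA_sum by (intro sum.cong) auto
qed

lemma orth:
  fixes \<phi> :: "(nat \<times> (int^'n) \<Rightarrow> 's) \<Rightarrow> real"
  assumes \<phi>m: "\<phi> \<in> borel_measurable \<Omega>"
    and \<phi>b: "\<And>\<xi>. \<bar>\<phi> \<xi>\<bar> \<le> C"
    and dep: "\<And>\<xi> \<xi>'. (\<And>w. w \<in> Jset k \<Longrightarrow> \<xi> w = \<xi>' w) \<Longrightarrow> \<phi> \<xi> = \<phi> \<xi>'"
  shows "(\<integral>\<xi>. \<phi> \<xi> * AA i j k \<xi> \<partial>\<Omega>) = 0"
proof -
  have "(\<integral>\<xi>. \<phi> \<xi> * AA i j k \<xi> \<partial>\<Omega>) =
        (\<integral>\<xi>. (\<Sum>x\<in>Bs k. (\<phi> \<xi> * pmf (q \<xi> k) x) * gg i j (\<xi> (k,x))) \<partial>\<Omega>)"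
    by (simp add: AA_sum sum_distrib_left mult.assoc)
  also have "\<dots> = (\<Sum>x\<in>Bs k. (\<integral>\<xi>. (\<phi> \<xi> * pmf (q \<xi> k) x) * gg i j (\<xi> (k,x)) \<partial>\<Omega>))"
  proof (rule Bochner_Integration.integral_sum)
    fix x
    show "integrable \<Omega> (\<lambda>\<xi>. (\<phi> \<xi> * pmf (q \<xi> k) x) * gg i j (\<xi> (k,x)))"
    proof (rule bounded_integrable_\<Omega>)
      show "(\<lambda>\<xi>. (\<phi> \<xi> * pmf (q \<xi> k) x) * gg i j (\<xi> (k,x))) \<in> borel_measurable \<Omega>"
        by (intro borel_measurable_times \<phi>m meas_pmf_q meas_coord)
      fix \<xi>
      have "\<bar>\<phi> \<xi> * pmf (q \<xi> k) x\<bar> \<le> C * 1"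
        unfolding abs_mult by (intro mult_mono \<phi>b) (auto simp: pmf_le_1 intro: order_trans[OF _ \<phi>b[of \<xi>]])
      then show "\<bar>(\<phi> \<xi> * pmf (q \<xi> k) x) * gg i j (\<xi> (k,x))\<bar> \<le> C * Cg i j"
        unfolding abs_mult[of _ "gg i j _"]
        by (intro mult_mono gg_bound) (auto intro: order_trans[OF abs_ge_zero])
    qed
  qed
  also have "\<dots> = (\<Sum>x\<in>Bs k. 0)"
  proof (rule sum.cong[OF refl])
    fix x
    show "(\<integral>\<xi>. (\<phi> \<xi> * pmf (q \<xi> k) x) * gg i j (\<xi> (k,x)) \<partial>\<Omega>) = 0"
    proof (rule indep0[OF finite_Jset notin_Jset])
      show "(\<lambda>\<xi>. \<phi> \<xi> * pmf (q \<xi> k) x) \<in> borel_measurable \<Omega>"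
        by (intro borel_measurable_times \<phi>m meas_pmf_q)
      fix \<xi>
      show "\<bar>\<phi> \<xi> * pmf (q \<xi> k) x\<bar> \<le> C * 1"
        unfolding abs_mult by (intro mult_mono \<phi>b) (auto simp: pmf_le_1 intro: order_trans[OF _ \<phi>b[of \<xi>]])
    next
      fix \<xi> \<xi>' :: "nat \<times> (int^'n) \<Rightarrow> 's"
      assume "\<And>w. w \<in> Jset k \<Longrightarrow> \<xi> w = \<xi>' w"
      then show "\<phi> \<xi> * pmf (q \<xi> k) x = \<phi> \<xi>' * pmf (q \<xi>' k) x"
        using dep q_dep' by metis
    qed (rule gg_mean)
  qed
  finally show ?thesis by simp
qed

definition SS :: "'n \<Rightarrow> 'n \<Rightarrow> nat \<Rightarrow> (nat \<times> (int^'n) \<Rightarrow> 's) \<Rightarrow> real" where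
  "SS i j t \<xi> = (\<Sum>k<t. AA i j k \<xi>)"

lemma SS_meas: "SS i j t \<in> borel_measurable \<Omega>"
proof -
  have "(\<lambda>\<xi>. \<Sum>k<t. AA i j k \<xi>) \<in> borel_measurable \<Omega>"
    by (intro borel_measurable_sum AA_meas)
  thus ?thesis unfolding SS_def[abs_def] .
qed

lemma SS_bound: "\<bar>SS i j t \<xi>\<bar> \<le> real t * Cg i j"
proof -
  have "\<bar>SS i j t \<xi>\<bar> \<le> (\<Sum>k<t. \<bar>AA i j k \<xi>\<bar>)" unfolding SS_def by (rule sum_abs)
  also have "\<dots> \<le> (\<Sum>k<t. Cg i j)" by (intro sum_mono AA_bound)
  finally show ?thesis by simp
qed

lemma SS_dep: "(\<And>w. w \<in> Jset t \<Longrightarrow> \<xi> w = \<xi>' w) \<Longrightarrow> SS i j t \<xi> = SS i j t \<xi>'"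
proof -
  assume h: "\<And>w. w \<in> Jset t \<Longrightarrow> \<xi> w = \<xi>' w"
  have "AA i j k \<xi> = AA i j k \<xi>'" if "k < t" for k
    by (rule AA_dep) (use h Jset_mono[of "Suc k" t] that in auto)
  thus ?thesis unfolding SS_def by (intro sum.cong) auto
qed

lemma SS_int: "(\<integral>\<xi>. SS i j t \<xi> \<partial>\<Omega>) = 0"
proof -
  have "(\<integral>\<xi>. SS i j t \<xi> \<partial>\<Omega>) = (\<Sum>k<t. \<integral>\<xi>. AA i j k \<xi> \<partial>\<Omega>)"
    unfolding SS_def
    by (rule Bochner_Integration.integral_sum) (rule bounded_integrable_\<Omega>[OF AA_meas AA_bound])
  also have "\<dots> = (\<Sum>k<t. 0)"
  proof (rule sum.cong[OF refl])
    fix k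
    have "(\<integral>\<xi>. 1 * AA i j k \<xi> \<partial>\<Omega>) = 0"
      by (rule orth[where C=1]) auto
    thus "(\<integral>\<xi>. AA i j k \<xi> \<partial>\<Omega>) = 0" by simp
  qed
  finally show ?thesis by simp
qed

lemma sq_le_of_abs: "\<bar>x::real\<bar> \<le> B \<Longrightarrow> x\<^sup>2 \<le> B\<^sup>2"
  using power_mono[of "\<bar>x\<bar>" B 2] by simp

lemma SS_var: "(\<integral>\<xi>. (SS i j t \<xi>)\<^sup>2 \<partial>\<Omega>) \<le> real t * (Cg i j)\<^sup>2"
proof (induction t)
  case 0 then show ?case by (simp add: SS_def)
next
  case (Suc t)
  interpret prob_space \<Omega> by (rule prob_\<Omega>)
  have sq: "(SS i j (Suc t) \<xi>)\<^sup>2 = (SS i j t \<xi>)\<^sup>2 + 2 * (SS i j t \<xi> * AA i j t \<xi>) + (AA i j t \<xi>)\<^sup>2" for \<xi>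
    by (simp add: SS_def power2_eq_square algebra_simps)
  have i1: "integrable \<Omega> (\<lambda>\<xi>. (SS i j t \<xi>)\<^sup>2)"
    by (rule bounded_integrable_\<Omega>[where B="(real t * Cg i j)\<^sup>2"])
       (auto intro!: SS_meas borel_measurable_power sq_le_of_abs SS_bound)
  have i2: "integrable \<Omega> (\<lambda>\<xi>. 2 * (SS i j t \<xi> * AA i j t \<xi>))"
    by (rule bounded_integrable_\<Omega>[where B="2 * (real t * Cg i j * Cg i j)"])
       (auto intro!: borel_measurable_times borel_measurable_const SS_meas AA_meas mult_mono SS_bound AA_bound simp: abs_mult Cg_nonneg)
  have i3: "integrable \<Omega> (\<lambda>\<xi>. (AA i j t \<xi>)\<^sup>2)"
    by (rule bounded_integrable_\<Omega>[where B="(Cg i j)\<^sup>2"])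
       (auto intro!: AA_meas borel_measurable_power sq_le_of_abs AA_bound)
  have o: "(\<integral>\<xi>. SS i j t \<xi> * AA i j t \<xi> \<partial>\<Omega>) = 0"
    by (rule orth[OF SS_meas SS_bound SS_dep])
  have a2: "(\<integral>\<xi>. (AA i j t \<xi>)\<^sup>2 \<partial>\<Omega>) \<le> (\<integral>\<xi>. (Cg i j)\<^sup>2 \<partial>\<Omega>)"
    using i3 by (intro Bochner_Integration.integral_mono) (auto intro!: sq_le_of_abs AA_bound)
  have "(\<integral>\<xi>. (SS i j (Suc t) \<xi>)\<^sup>2 \<partial>\<Omega>) =
     (\<integral>\<xi>. (SS i j t \<xi>)\<^sup>2 \<partial>\<Omega>) + (\<integral>\<xi>. 2 * (SS i j t \<xi> * AA i j t \<xi>) \<partial>\<Omega>) + (\<integral>\<xi>. (AA i j t \<xi>)\<^sup>2 \<partial>\<Omega>)"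
    unfolding sq using i1 i2 i3 by simp
  also have "\<dots> \<le> real t * (Cg i j)\<^sup>2 + 0 + (Cg i j)\<^sup>2"
    using Suc.IH o a2 by (simp add: prob_space)
  finally show ?case by (simp add: algebra_simps)
qed

end


lemma diff_bound_nat:
  fixes S :: "nat \<Rightarrow> real"
  assumes inc: "\<And>t. \<bar>S (Suc t) - S t\<bar> \<le> C"
  shows "\<bar>S (a + d) - S a\<bar> \<le> real d * C"
proof (induction d)
  case 0 then show ?case by simp
next
  case (Suc d)
  have "\<bar>S (a + Suc d) - S a\<bar> \<le> \<bar>S (Suc (a + d)) - S (a + d)\<bar> + \<bar>S (a + d) - S a\<bar>" by simp
  also have "\<dots> \<le> C + real d * C" using inc Suc.IH by (intro add_mono) auto
  finally show ?case by (simp add: algebra_simps)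
qed

lemma exists_sq_between: "1 \<le> t \<Longrightarrow> \<exists>m. (Suc m)\<^sup>2 \<le> t \<and> t < (Suc (Suc m))\<^sup>2"
proof (induction t rule: nat_induct_at_least)
  case base
  show ?case by (rule exI[of _ 0]) (simp add: power2_eq_square)
next
  case (Suc t)
  then obtain m where m: "(Suc m)\<^sup>2 \<le> t" "t < (Suc (Suc m))\<^sup>2" by blast
  show ?case
  proof (cases "Suc t < (Suc (Suc m))\<^sup>2")
    case True then show ?thesis using m by (intro exI[of _ m]) auto
  next
    case False
    then have e: "Suc t = (Suc (Suc m))\<^sup>2" using m by linarith
    have "Suc t < (Suc (Suc (Suc m)))\<^sup>2" unfolding e by (simp add: power2_eq_square)
    then show ?thesis using e by (intro exI[of _ "Suc m"]) auto
  qed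
qed

lemma interp:
  fixes S :: "nat \<Rightarrow> real"
  assumes lim: "(\<lambda>m. S ((Suc m)\<^sup>2) / real ((Suc m)\<^sup>2)) \<longlonglongrightarrow> 0"
    and inc: "\<And>t. \<bar>S (Suc t) - S t\<bar> \<le> C"
  shows "(\<lambda>t. S t / real t) \<longlonglongrightarrow> 0"
proof (rule LIMSEQ_I)
  fix r :: real assume r: "0 < r"
  have C0: "0 \<le> C" using inc[of 0] by linarith
  obtain M1 where M1: "\<And>m. m \<ge> M1 \<Longrightarrow> norm (S ((Suc m)\<^sup>2) / real ((Suc m)\<^sup>2) - 0) < r / 2"
    using LIMSEQ_D[OF lim, of "r/2"] r by auto
  obtain M2 :: nat where M2: "6 * C / r < real M2" using reals_Archimedean2 by blast
  define M where "M = max M1 M2"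
  show "\<exists>no. \<forall>t\<ge>no. norm (S t / real t - 0) < r"
  proof (intro exI allI impI)
    fix t assume t: "(Suc M)\<^sup>2 \<le> t"
    have t1: "1 \<le> t" using t by (simp add: power2_eq_square)
    obtain m where m: "(Suc m)\<^sup>2 \<le> t" "t < (Suc (Suc m))\<^sup>2" using exists_sq_between[OF t1] by blast
    have "Suc M < Suc (Suc m)"
    proof (rule ccontr)
      assume "\<not> Suc M < Suc (Suc m)"
      then have "Suc (Suc m) \<le> Suc M" by simp
      then have "(Suc (Suc m))\<^sup>2 \<le> (Suc M)\<^sup>2" by (rule power_mono) simp
      then show False using t m by linarith
    qed
    then have mM: "M \<le> m" by simp
    define n where "n = (Suc m)\<^sup>2"
    have n_pos: "0 < real n" by (simp add: n_def)
    have nt0: "n \<le> t" using m(1) by (simp add: n_def)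
    have nt: "real n \<le> real t" using nt0 by (simp only: of_nat_le_iff)
    have d: "t - n \<le> 2 * m + 3" using m unfolding n_def by (simp add: power2_eq_square)
    have "\<bar>S t - S n\<bar> \<le> real (t - n) * C"
      using diff_bound_nat[where S=S and C=C and a=n and d="t - n", OF inc] m by (simp add: n_def)
    also have "\<dots> \<le> real (2 * m + 3) * C" using d C0 by (intro mult_right_mono) auto
    finally have st: "\<bar>S t\<bar> \<le> \<bar>S n\<bar> + real (2 * m + 3) * C" by linarith
    have "\<bar>S t / real t\<bar> = \<bar>S t\<bar> / real t" by simp
    also have "\<dots> \<le> (\<bar>S n\<bar> + real (2 * m + 3) * C) / real n"
      using st nt n_pos by (intro frac_le) auto
    also have "\<dots> = \<bar>S n / real n\<bar> + real (2 * m + 3) * C / real n"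
      using n_pos by (simp add: add_divide_distrib)
    also have "real (2 * m + 3) * C / real n \<le> 3 * C / real (Suc m)"
    proof -
      have "real (2 * m + 3) * C * real (Suc m) \<le> 3 * C * real n"
      proof -
        have "real (2 * m + 3) * real (Suc m) \<le> 3 * real n"
          unfolding n_def by (simp add: power2_eq_square algebra_simps)
        thus ?thesis using C0 by (metis mult.assoc mult.commute mult_right_mono)
      qed
      thus ?thesis using n_pos by (simp add: divide_simps)
    qed
    also have "3 * C / real (Suc m) < r / 2"
    proof -
      have "6 * C < r * real M2" using M2 r by (simp add: divide_simps mult.commute)
      also have "\<dots> \<le> r * real (Suc m)" using mM r by (intro mult_left_mono) (auto simp: M_def)
      finally show ?thesis by (simp add: divide_simps)
    qed
    also have "\<bar>S n / real n\<bar> < r / 2" using M1[of m] mM by (simp add: M_def n_def)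
    finally show "norm (S t / real t - 0) < r" by simp
  qed
qed

context rwalk begin

lemma SS_Suc_bound: "\<bar>SS i j (Suc t) \<xi> - SS i j t \<xi>\<bar> \<le> Cg i j"
  by (simp add: SS_def AA_bound)

lemma SS_sq_lim: "AE \<xi> in \<Omega>. (\<lambda>m. SS i j ((Suc m)\<^sup>2) \<xi> / real ((Suc m)\<^sup>2)) \<longlonglongrightarrow> 0"
proof -
  interpret prob_space \<Omega> by (rule prob_\<Omega>)
  define X where "X m \<xi> = (SS i j ((Suc m)\<^sup>2) \<xi> / real ((Suc m)\<^sup>2))\<^sup>2" for m \<xi>
  have Xm: "X m \<in> borel_measurable \<Omega>" for m
  proof -
    have "(\<lambda>\<xi>. (SS i j ((Suc m)\<^sup>2) \<xi> / real ((Suc m)\<^sup>2))\<^sup>2) \<in> borel_measurable \<Omega>"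
      by (intro borel_measurable_power borel_measurable_divide SS_meas borel_measurable_const)
    thus ?thesis unfolding X_def[abs_def] .
  qed
  have Xb: "\<bar>SS i j n \<xi> / real n\<bar> \<le> Cg i j" if "0 < n" for n \<xi>
  proof -
    have "\<bar>SS i j n \<xi>\<bar> \<le> Cg i j * real n" using SS_bound[of i j n \<xi>] by (simp add: mult.commute)
    thus ?thesis using that by (simp add: abs_divide pos_divide_le_eq)
  qed
  have Xint: "integrable \<Omega> (X m)" for m
  proof (rule bounded_integrable_\<Omega>[OF Xm, where B="(Cg i j)\<^sup>2"])
    fix \<xi>
    have "(SS i j ((Suc m)\<^sup>2) \<xi> / real ((Suc m)\<^sup>2))\<^sup>2 \<le> (Cg i j)\<^sup>2"
      by (rule sq_le_of_abs, rule Xb) simp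
    thus "\<bar>X m \<xi>\<bar> \<le> (Cg i j)\<^sup>2" by (simp add: X_def)
  qed
  have EX: "(\<integral>\<xi>. X m \<xi> \<partial>\<Omega>) \<le> (Cg i j)\<^sup>2 * inverse ((real (Suc m))\<^sup>2)" for m
  proof -
    define n where "n = (Suc m)\<^sup>2"
    have np: "0 < real n" by (simp add: n_def)
    have "(\<integral>\<xi>. X m \<xi> \<partial>\<Omega>) = (\<integral>\<xi>. (SS i j n \<xi>)\<^sup>2 \<partial>\<Omega>) / (real n)\<^sup>2"
      by (simp add: X_def n_def power_divide)
    also have "\<dots> \<le> real n * (Cg i j)\<^sup>2 / (real n)\<^sup>2"
      by (intro divide_right_mono SS_var) simp
    also have "\<dots> = (Cg i j)\<^sup>2 / real n" using np by (simp add: power2_eq_square)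
    also have "\<dots> = (Cg i j)\<^sup>2 * inverse ((real (Suc m))\<^sup>2)" by (simp add: n_def divide_inverse)
    finally show ?thesis .
  qed
  have summ: "summable (\<lambda>m. (Cg i j)\<^sup>2 * inverse ((real (Suc m))\<^sup>2))"
  proof -
    have "summable (\<lambda>m. inverse ((real (Suc m))\<^sup>2))"
      using inverse_power_summable[of 2] by (subst summable_Suc_iff) simp
    thus ?thesis by (rule summable_mult)
  qed
  have "(\<integral>\<^sup>+\<xi>. (\<Sum>m. ennreal (X m \<xi>)) \<partial>\<Omega>) = (\<Sum>m. \<integral>\<^sup>+\<xi>. ennreal (X m \<xi>) \<partial>\<Omega>)"
    by (rule nn_integral_suminf) (rule measurable_compose[OF Xm measurable_ennreal])
  also have "\<dots> = (\<Sum>m. ennreal (\<integral>\<xi>. X m \<xi> \<partial>\<Omega>))"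
    by (intro suminf_cong nn_integral_eq_integral Xint) (auto simp: X_def)
  also have "\<dots> \<le> (\<Sum>m. ennreal ((Cg i j)\<^sup>2 * inverse ((real (Suc m))\<^sup>2)))"
    by (intro suminf_le summableI ennreal_leI EX)
  also have "\<dots> = ennreal (\<Sum>m. (Cg i j)\<^sup>2 * inverse ((real (Suc m))\<^sup>2))"
    by (rule suminf_ennreal2[OF _ summ]) simp
  also have "\<dots> < \<infinity>" by simp
  finally have fin: "(\<integral>\<^sup>+\<xi>. (\<Sum>m. ennreal (X m \<xi>)) \<partial>\<Omega>) \<noteq> \<infinity>" by simp
  have "AE \<xi> in \<Omega>. (\<Sum>m. ennreal (X m \<xi>)) \<noteq> \<infinity>"
    by (rule nn_integral_PInf_AE[OF _ fin]) (intro borel_measurable_suminf_order measurable_compose[OF Xm measurable_ennreal])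
  then show ?thesis
  proof (rule AE_mp, intro AE_I2 impI)
    fix \<xi> assume "(\<Sum>m. ennreal (X m \<xi>)) \<noteq> \<infinity>"
    then have "summable (\<lambda>m. X m \<xi>)"
      by (intro summable_suminf_not_top) (auto simp: X_def)
    then have "(\<lambda>m. X m \<xi>) \<longlonglongrightarrow> 0" by (rule summable_LIMSEQ_zero)
    then have "(\<lambda>m. sqrt (X m \<xi>)) \<longlonglongrightarrow> sqrt 0" by (rule tendsto_real_sqrt)
    then have "(\<lambda>m. \<bar>SS i j ((Suc m)\<^sup>2) \<xi> / real ((Suc m)\<^sup>2)\<bar>) \<longlonglongrightarrow> 0"
      by (simp add: X_def)
    then show "(\<lambda>m. SS i j ((Suc m)\<^sup>2) \<xi> / real ((Suc m)\<^sup>2)) \<longlonglongrightarrow> 0"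
      by (simp only: tendsto_rabs_zero_iff)
  qed
qed

lemma SS_lim: "AE \<xi> in \<Omega>. (\<lambda>t. SS i j t \<xi> / real t) \<longlonglongrightarrow> 0"
  using SS_sq_lim[of i j]
proof eventually_elim
  case (elim \<xi>)
  show ?case by (rule interp[where S="\<lambda>t. SS i j t \<xi>", OF elim SS_Suc_bound])
qed

end


context rwalk begin

lemma sm_quenched: "second_moment b t (measure_pmf (q \<xi> t)) $ i $ j = mom i j \<xi> t"
  by (simp add: second_moment_def mom_def Yf_def[abs_def])

lemma K_meas: "(\<lambda>\<xi>. measure_pmf (q \<xi> t)) \<in> measurable \<Omega> (subprob_algebra (count_space UNIV))"
proof (rule measurable_subprob_algebra)
  fix \<xi> show "subprob_space (measure_pmf (q \<xi> t))"
    by (rule prob_space_imp_subprob_space) (rule prob_space_measure_pmf)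
next
  fix \<xi> show "sets (measure_pmf (q \<xi> t)) = sets (count_space UNIV)" by simp
next
  fix A :: "(int^'n) set"
  have e: "emeasure (measure_pmf (q \<xi> t)) A = (\<Sum>s\<in>A \<inter> Bs t. ennreal (pmf (q \<xi> t) s))" for \<xi>
  proof -
    have "emeasure (measure_pmf (q \<xi> t)) A = emeasure (measure_pmf (q \<xi> t)) (A \<inter> Bs t)"
      by (rule emeasure_eq_AE) (use set_q[of \<xi> t] in \<open>auto simp: AE_measure_pmf_iff\<close>)
    also have "\<dots> = (\<Sum>s\<in>A \<inter> Bs t. ennreal (pmf (q \<xi> t) s))"
      by (subst emeasure_measure_pmf_finite) (auto simp: finite_Bs)
    finally show ?thesis .
  qed
  show "(\<lambda>\<xi>. emeasure (measure_pmf (q \<xi> t)) A) \<in> borel_measurable \<Omega>"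
    unfolding e by (intro borel_measurable_sum measurable_compose[OF meas_pmf_q measurable_ennreal])
qed

lemma sm_annealed: "second_moment b t (annealed_dist P0 c x0 \<pi> t) $ i $ j = (\<integral>\<xi>. mom i j \<xi> t \<partial>\<Omega>)"
proof -
  interpret prob_space \<Omega> by (rule prob_\<Omega>)
  define K where "K \<xi> = measure_pmf (q \<xi> t)" for \<xi>
  have Km: "K \<in> measurable \<Omega> (subprob_algebra (count_space UNIV))"
    unfolding K_def by (rule K_meas)
  have ne: "space \<Omega> \<noteq> {}" by (simp add: space_\<Omega>)
  have sb: "sets (\<Omega> \<bind> K) = sets (count_space UNIV)"
    by (rule sets_bind[OF _ ne]) (simp add: K_def)
  define f where "f = Yf i j t"
  define f' where "f' x = (if x \<in> Bs t then f x else 0)" for x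
  have "second_moment b t (annealed_dist P0 c x0 \<pi> t) $ i $ j = (\<integral>x. f x \<partial>(\<Omega> \<bind> K))"
    by (simp add: second_moment_def annealed_dist_def K_def[abs_def] f_def Yf_def[abs_def])
  also have "\<dots> = (\<integral>x. f' x \<partial>(\<Omega> \<bind> K))"
  proof (rule integral_cong_AE)
    show "f \<in> borel_measurable (\<Omega> \<bind> K)" "f' \<in> borel_measurable (\<Omega> \<bind> K)"
      by (simp_all add: measurable_cong_sets[OF sb refl])
    have "AE x in \<Omega> \<bind> K. x \<in> Bs t"
    proof (subst AE_bind[OF Km])
      show "Measurable.pred (count_space UNIV) (\<lambda>x. x \<in> Bs t)" by simp
      show "AE \<xi> in \<Omega>. AE x in K \<xi>. x \<in> Bs t"
      proof (rule AE_I2)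
        fix \<xi> show "AE x in K \<xi>. x \<in> Bs t"
          unfolding K_def AE_measure_pmf_iff using set_q[of \<xi> t] by blast
      qed
    qed
    then show "AE x in \<Omega> \<bind> K. f x = f' x" by eventually_elim (simp add: f'_def)
  qed
  also have "\<dots> = (\<integral>\<xi>. (\<integral>x. f' x \<partial>K \<xi>) \<partial>\<Omega>)"
  proof (rule integral_bind[OF _ _ Km, where B="\<Sum>x\<in>Bs t. \<bar>f x\<bar>" and B'=1])
    show "f' \<in> borel_measurable (count_space UNIV)" by simp
    fix x show "\<bar>f' x\<bar> \<le> (\<Sum>x\<in>Bs t. \<bar>f x\<bar>)"
      by (auto simp: f'_def finite_Bs intro: member_le_sum)
  next
    show "finite_measure \<Omega>" by unfold_locales
    show "AE \<xi> in \<Omega>. emeasure (K \<xi>) (space (K \<xi>)) \<le> ennreal 1"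
      by (simp add: K_def measure_pmf.emeasure_space_1)
  qed
  also have "\<dots> = (\<integral>\<xi>. mom i j \<xi> t \<partial>\<Omega>)"
  proof (rule Bochner_Integration.integral_cong[OF refl])
    fix \<xi>
    show "(\<integral>x. f' x \<partial>K \<xi>) = mom i j \<xi> t"
      unfolding mom_def K_def f_def[symmetric]
      by (rule integral_cong_AE) (use set_q[of \<xi> t] in \<open>auto simp: f'_def AE_measure_pmf_iff\<close>)
  qed
  finally show ?thesis .
qed

lemma mom_SS: "mom i j \<xi> t = Yf i j 0 x0 + real t * eta i j + SS i j t \<xi>"
  by (simp add: mom_AA SS_def)

lemma int_mom: "(\<integral>\<xi>. mom i j \<xi> t \<partial>\<Omega>) = Yf i j 0 x0 + real t * eta i j"
proof -
  interpret prob_space \<Omega> by (rule prob_\<Omega>)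
  have "(\<integral>\<xi>. mom i j \<xi> t \<partial>\<Omega>) = (\<integral>\<xi>. (Yf i j 0 x0 + real t * eta i j) + SS i j t \<xi> \<partial>\<Omega>)"
    by (simp add: mom_SS)
  also have "\<dots> = (\<integral>\<xi>. (Yf i j 0 x0 + real t * eta i j) \<partial>\<Omega>) + (\<integral>\<xi>. SS i j t \<xi> \<partial>\<Omega>)"
    by (rule Bochner_Integration.integral_add)
       (auto intro: bounded_integrable_\<Omega>[OF SS_meas SS_bound])
  also have "\<dots> = Yf i j 0 x0 + real t * eta i j" by (simp add: SS_int prob_space)
  finally show ?thesis .
qed

lemma lim_affine:
  fixes a e :: real and S :: "nat \<Rightarrow> real"
  assumes "(\<lambda>t. S t / real t) \<longlonglongrightarrow> 0"
  shows "(\<lambda>t. (1 / real t) * (a + real t * e + S t)) \<longlonglongrightarrow> e"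
proof -
  have "(\<lambda>t. a * inverse (real t) + e + S t / real t) \<longlonglongrightarrow> a * 0 + e + 0"
    by (intro tendsto_intros assms lim_inverse_n)
  moreover have "eventually (\<lambda>t. a * inverse (real t) + e + S t / real t = (1 / real t) * (a + real t * e + S t)) sequentially"
    using eventually_gt_at_top[of "0::nat"]
    by eventually_elim (simp add: field_simps)
  ultimately show ?thesis by (simp add: tendsto_cong)
qed

lemma eta_eq:
  defines "Pbar \<equiv> (\<lambda>u. P0 u + (\<Sum>s\<in>UNIV. pmf \<pi> s * c u s))"
  shows "(\<Sum>\<^sub>\<infinity>u. (rvec u $ i - b $ i) * (rvec u $ j - b $ j) * Pbar u) = eta i j"
proof -
  define D where "D u = (rvec u $ i - b $ i) * (rvec u $ j - b $ j)" for u
  have "(\<Sum>\<^sub>\<infinity>u. (rvec u $ i - b $ i) * (rvec u $ j - b $ j) * Pbar u) =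
        (\<Sum>u\<in>F. (rvec u $ i - b $ i) * (rvec u $ j - b $ j) * Pbar u)"
    by (rule infsum_fin[OF finite_F]) (simp add: Pbar_def P0_out c_out)
  also have "\<dots> = (\<Sum>u\<in>F. D u * Pbar u)" by (simp add: D_def)
  also have "\<dots> = (\<Sum>u\<in>F. \<Sum>s\<in>UNIV. pmf \<pi> s * (D u * (P0 u + c u s)))"
  proof (rule sum.cong[OF refl])
    fix u
    have "(\<Sum>s\<in>UNIV. pmf \<pi> s * (D u * (P0 u + c u s))) =
          D u * P0 u * (\<Sum>s\<in>UNIV. pmf \<pi> s) + D u * (\<Sum>s\<in>UNIV. pmf \<pi> s * c u s)"
      by (simp add: sum_distrib_left sum_distrib_right sum.distrib algebra_simps)
    then show "D u * Pbar u = (\<Sum>s\<in>UNIV. pmf \<pi> s * (D u * (P0 u + c u s)))"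
      by (simp add: sum_pi Pbar_def algebra_simps)
  qed
  also have "\<dots> = (\<Sum>s\<in>UNIV. \<Sum>u\<in>F. pmf \<pi> s * (D u * (P0 u + c u s)))"
    by (rule sum.swap)
  also have "\<dots> = eta i j"
    by (simp add: eta_def G_def pmf_J D_def sum_distrib_left algebra_simps)
  finally show ?thesis .
qed

lemma main_rw:
  defines "Pbar \<equiv> (\<lambda>u. P0 u + (\<Sum>s\<in>UNIV. pmf \<pi> s * c u s))"
  defines "\<eta>2 \<equiv> (\<chi> i j. \<Sum>\<^sub>\<infinity>u. (rvec u $ i - b $ i) * (rvec u $ j - b $ j) * Pbar u)"
  shows "(\<lambda>t. (1 / real t) *\<^sub>R second_moment b t (annealed_dist P0 c x0 \<pi> t)) \<longlonglongrightarrow> \<eta>2 \<and>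
         (AE \<xi> in \<Omega>.
           (\<lambda>t. (1 / real t) *\<^sub>R second_moment b t (measure_pmf (q \<xi> t))) \<longlonglongrightarrow> \<eta>2)"
proof
  have e: "\<eta>2 $ i $ j = eta i j" for i j
    unfolding \<eta>2_def Pbar_def using eta_eq by simp
  show "(\<lambda>t. (1 / real t) *\<^sub>R second_moment b t (annealed_dist P0 c x0 \<pi> t)) \<longlonglongrightarrow> \<eta>2"
  proof (rule vec_tendstoI, rule vec_tendstoI)
    fix i j
    have "(\<lambda>t. (1 / real t) * (Yf i j 0 x0 + real t * eta i j + 0)) \<longlonglongrightarrow> eta i j"
      by (rule lim_affine) simp
    then show "(\<lambda>t. ((1 / real t) *\<^sub>R second_moment b t (annealed_dist P0 c x0 \<pi> t)) $ i $ j) \<longlonglongrightarrow> \<eta>2 $ i $ j"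
      by (simp add: e sm_annealed int_mom)
  qed
  have "AE \<xi> in \<Omega>. \<forall>i. \<forall>j. (\<lambda>t. SS i j t \<xi> / real t) \<longlonglongrightarrow> 0"
    by (intro eventually_all_finite SS_lim)
  then show "AE \<xi> in \<Omega>. (\<lambda>t. (1 / real t) *\<^sub>R second_moment b t (measure_pmf (q \<xi> t))) \<longlonglongrightarrow> \<eta>2"
  proof eventually_elim
    case (elim \<xi>)
    show ?case
    proof (rule vec_tendstoI, rule vec_tendstoI)
      fix i j
      have "(\<lambda>t. (1 / real t) * (Yf i j 0 x0 + real t * eta i j + SS i j t \<xi>)) \<longlonglongrightarrow> eta i j"
        by (rule lim_affine) (use elim in blast)
      then show "(\<lambda>t. ((1 / real t) *\<^sub>R second_moment b t (measure_pmf (q \<xi> t))) $ i $ j) \<longlonglongrightarrow> \<eta>2 $ i $ j"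
        by (simp add: e sm_quenched mom_SS)
    qed
  qed
qed

end


theorem lemma3p6:
  fixes \<pi> :: "'s::finite pmf"
    and P0 :: "int ^ 'n \<Rightarrow> real"
    and c :: "int ^ 'n \<Rightarrow> 's \<Rightarrow> real"
    and x0 :: "int ^ 'n"
    and bc :: "real ^ 'n"
  assumes P0_nonneg: "\<And>u. P0 u \<ge> 0"
    and P0_sum: "(\<Sum>\<^sub>\<infinity>u. P0 u) = 1"
    and Pc_bounds: "\<And>u s. 0 \<le> P0 u + c u s \<and> P0 u + c u s \<le> 1"
    and c_sum: "\<And>s. (\<Sum>\<^sub>\<infinity>u. c u s) = 0"
    and c_mean: "\<And>u. (\<Sum>s\<in>UNIV. c u s * pmf \<pi> s) = 0"
    and P0_range: "\<exists>R. \<forall>u. P0 u \<noteq> 0 \<longrightarrow> norm (rvec u) \<le> R"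
    and c_range: "\<exists>R. \<forall>u s. c u s \<noteq> 0 \<longrightarrow> norm (rvec u) \<le> R"
    and c_drift: "\<And>s. (\<Sum>\<^sub>\<infinity>u. c u s *\<^sub>R rvec u) = bc"
  defines "b \<equiv> (\<Sum>\<^sub>\<infinity>u. P0 u *\<^sub>R rvec u) + bc"
    and "Pbar \<equiv> (\<lambda>u. P0 u + (\<Sum>s\<in>UNIV. pmf \<pi> s * c u s))"
  defines "\<eta>2 \<equiv> (\<chi> i j. \<Sum>\<^sub>\<infinity>u. (rvec u $ i - b $ i) * (rvec u $ j - b $ j) * Pbar u)"
  shows "(\<lambda>t. (1 / real t) *\<^sub>R second_moment b t (annealed_dist P0 c x0 \<pi> t)) \<longlonglongrightarrow> \<eta>2 \<and>
         (AE \<xi> in env_law \<pi>.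
           (\<lambda>t. (1 / real t) *\<^sub>R second_moment b t (measure_pmf (quenched_dist P0 c x0 \<xi> t)))
             \<longlonglongrightarrow> \<eta>2)"
proof -
  interpret R: rwalk \<pi> P0 c x0 bc
  proof (rule rwalk.intro)
    show "\<And>u. P0 u \<ge> 0" by (rule P0_nonneg)
    show "(\<Sum>\<^sub>\<infinity>u. P0 u) = 1" by (rule P0_sum)
    show "\<And>u s. 0 \<le> P0 u + c u s \<and> P0 u + c u s \<le> 1" by (rule Pc_bounds)
    show "\<And>s. (\<Sum>\<^sub>\<infinity>u. c u s) = 0" by (rule c_sum)
    show "\<And>u. (\<Sum>s\<in>UNIV. c u s * pmf \<pi> s) = 0" by (rule c_mean)
    show "\<exists>R. \<forall>u. P0 u \<noteq> 0 \<longrightarrow> norm (rvec u) \<le> R" by (rule P0_range)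
    show "\<exists>R. \<forall>u s. c u s \<noteq> 0 \<longrightarrow> norm (rvec u) \<le> R" by (rule c_range)
    show "\<And>s. (\<Sum>\<^sub>\<infinity>u. c u s *\<^sub>R rvec u) = bc" by (rule c_drift)
  qed
  have bR: "b = R.b" unfolding b_def R.b_def by simp
  show ?thesis using R.main_rw unfolding \<eta>2_def Pbar_def bR by simp
qed

end
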